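(* Let $\varphi=\frac{1+\sqrt5}{2}$ and $\theta_0=\left(\frac12,\frac1\varphi,\frac1{\varphi^2}\right)$. There exists a partition $\mathcal P=\bigcup_{1\le i\le 7}P_{a_i}$ of the face $X=0$ of the cube $[0,1]^3$ and a map $\Phi$ from $\{a_1,\dots,a_7\}$ to $\{a,b,c\}^*$, given by $\Phi(a_1)=acb$, $\Phi(a_2)=abc$, $\Phi(a_3)=abcb$, $\Phi(a_4)=abb$, $\Phi(a_5)=abbc$, $\Phi(a_6)=acbb$, $\Phi(a_7)=ab$, such that for every $m\in P_{a_i}$ with well defined orbit, $\Phi(a_i)$ is the first return word of $a$ in $f_{\theta_0}(m)$.
   Context: For $m$ such that the line $m+\mathbb R\theta_0$ contains no point with more than one integer coordinate, $f_{\theta_0}(m)\in\{a,b,c\}^{\mathbb N}$ records, in order, the successive intersections of the half line $m+\mathbb R_+\theta_0$ with the planes $X=n$ (letter $a$), $Y=n$ (letter $b$), $Z=n$ (letter $c$), $n\in\mathbb Z$; for $m$ on the face $X=0$ it begins with $a$. The return words of $a$ in such a word $u$ are the factors of $u$ starting at an occurrence of $a$ and ending just before the next occurrence of $a$; the first return word is the prefix of $u$ preceding the second occurrence of $a$. *)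

theory Defs
  imports Complex_Main
begin

datatype letter = A | B | C

type_synonym point = "real \<times> real \<times> real"

fun coord :: "letter \<Rightarrow> point \<Rightarrow> real" where
  "coord A (x, y, z) = x"
| "coord B (x, y, z) = y"
| "coord C (x, y, z) = z"

definition phi :: real where "phi = (1 + sqrt 5) / 2"

definition theta0 :: point where "theta0 = (1/2, 1/phi, 1/phi^2)"

definition move :: "point \<Rightarrow> point \<Rightarrow> real \<Rightarrow> point" where
  "move m \<theta> t = (fst m + t * fst \<theta>, fst (snd m) + t * fst (snd \<theta>),
                   snd (snd m) + t * snd (snd \<theta>))"

definition well_defined_orbit :: "point \<Rightarrow> point \<Rightarrow> bool" where
  "well_defined_orbit \<theta> m \<longleftrightarrow>
     (\<forall>t::real. \<forall>l l'. l \<noteq> l' \<longrightarrow>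
        \<not> (coord l (move m \<theta> t) \<in> \<int> \<and> coord l' (move m \<theta> t) \<in> \<int>))"

definition is_coding :: "point \<Rightarrow> point \<Rightarrow> (nat \<Rightarrow> letter) \<Rightarrow> bool" where
  "is_coding \<theta> m w \<longleftrightarrow>
     (\<exists>ts :: nat \<Rightarrow> real. strict_mono ts \<and>
        range ts = {t. t \<ge> 0 \<and> (\<exists>l. coord l (move m \<theta> t) \<in> \<int>)} \<and>
        (\<forall>k. coord (w k) (move m \<theta> (ts k)) \<in> \<int>))"

definition orbit_word :: "point \<Rightarrow> point \<Rightarrow> nat \<Rightarrow> letter" where
  "orbit_word \<theta> m = (THE w. is_coding \<theta> m w)"

definition first_return_word :: "(nat \<Rightarrow> letter) \<Rightarrow> letter list" where
  "first_return_word u =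
     map u [0..<(LEAST n. u n = A \<and> (\<exists>n1 < n. u n1 = A))]"

definition face_X0 :: "point set" where
  "face_X0 = {(0, y, z) | y z. 0 \<le> y \<and> y \<le> 1 \<and> 0 \<le> z \<and> z \<le> 1}"

datatype sym = a1 | a2 | a3 | a4 | a5 | a6 | a7

fun Phi :: "sym \<Rightarrow> letter list" where
  "Phi a1 = [A, C, B]"
| "Phi a2 = [A, B, C]"
| "Phi a3 = [A, B, C, B]"
| "Phi a4 = [A, B, B]"
| "Phi a5 = [A, B, B, C]"
| "Phi a6 = [A, C, B, B]"
| "Phi a7 = [A, B]"

end

theory Submission
  imports Defs
begin


lemma coord_move: "coord l (move m th t) = coord l m + t * coord l th"
  by (cases m rule: prod_cases3; cases th rule: prod_cases3; cases l) (auto simp: move_def)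

lemma ex_letter: "(\<exists>l. P l) \<longleftrightarrow> P A \<or> P B \<or> P C"
  by (metis letter.exhaust)

definition Sset :: "point \<Rightarrow> point \<Rightarrow> real set" where
  "Sset th m = {t. t \<ge> 0 \<and> (\<exists>l. coord l (move m th t) \<in> \<int>)}"

lemma finite_lin:
  fixes c v T :: real
  assumes "v > 0"
  shows "finite {t. 0 \<le> t \<and> t \<le> T \<and> c + t*v \<in> \<int>}"
proof -
  have "{t. 0 \<le> t \<and> t \<le> T \<and> c + t*v \<in> \<int>} \<subseteq> (\<lambda>n. (of_int n - c)/v) ` {\<lfloor>c\<rfloor>..\<lceil>c+T*v\<rceil>}"
  proof
    fix t assume t: "t \<in> {t. 0 \<le> t \<and> t \<le> T \<and> c + t*v \<in> \<int>}"
    then obtain n where n: "c + t*v = of_int n" by (auto elim: Ints_cases)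
    have tv: "t*v = of_int n - c" using n by simp
    have "t = (of_int n - c)/v" using tv assms by (simp add: eq_divide_eq)
    moreover have tv0: "0 \<le> t*v" using t assms by simp
    have "of_int \<lfloor>c\<rfloor> \<le> (of_int n::real)" using n tv0 of_int_floor_le[of c] by linarith
    hence "\<lfloor>c\<rfloor> \<le> n" by simp
    moreover have "t*v \<le> T*v" using t assms by (simp add: mult_right_mono)
    hence "(of_int n::real) \<le> of_int \<lceil>c+T*v\<rceil>" using n le_of_int_ceiling[of "c+T*v"] by linarith
    hence "n \<le> \<lceil>c+T*v\<rceil>" by simp
    ultimately show "t \<in> (\<lambda>n. (of_int n - c)/v) ` {\<lfloor>c\<rfloor>..\<lceil>c+T*v\<rceil>}" by auto
  qed
  thus ?thesis by (rule finite_subset) auto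
qed

lemma finite_S:
  assumes pos: "\<forall>l. coord l th > 0"
  shows "finite {t \<in> Sset th m. t \<le> T}"
proof -
  have "{t \<in> Sset th m. t \<le> T} \<subseteq> (\<Union>l\<in>{A,B,C}. {t. 0 \<le> t \<and> t \<le> T \<and> coord l m + t * coord l th \<in> \<int>})"
    by (auto simp: Sset_def coord_move ex_letter)
  moreover have "finite (\<Union>l\<in>{A,B,C}. {t. 0 \<le> t \<and> t \<le> T \<and> coord l m + t * coord l th \<in> \<int>})"
    using finite_lin pos by blast
  ultimately show ?thesis by (rule finite_subset)
qed

lemma unb:
  assumes pos: "\<forall>l. coord l th > 0"
  shows "\<exists>t\<in>Sset th m. r < t"
proof -
  define c where "c = coord A m"
  define v where "v = coord A th"
  define R where "R = max r 0"
  define n where "n = \<lfloor>c + (R+1)*v\<rfloor> + 1"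
  have v: "v > 0" using pos v_def by auto
  have n: "of_int n > c + (R+1)*v" unfolding n_def using floor_correct[of "c+(R+1)*v"] by simp
  define t where "t = (of_int n - c)/v"
  have tv: "t * v = of_int n - c" using v t_def by simp
  have "(R+1) * v < t * v" using n tv by simp
  hence "R + 1 < t" using v by simp
  hence t1: "r < t" "0 \<le> t" unfolding R_def by auto
  have "coord A (move m th t) = of_int n" using tv by (simp add: coord_move c_def[symmetric] v_def[symmetric])
  hence "t \<in> Sset th m" using t1 unfolding Sset_def by (metis (mono_tags, lifting) Ints_of_int mem_Collect_eq)
  thus ?thesis using t1 by blast
qed

lemma least_ex:
  assumes pos: "\<forall>l. coord l th > 0"
  shows "\<exists>t. t \<in> Sset th m \<and> r < t \<and> (\<forall>u\<in>Sset th m. r < u \<longrightarrow> t \<le> u)"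
proof -
  obtain u0 where u0: "u0 \<in> Sset th m" "r < u0" using unb[OF pos] by blast
  let ?F = "{t \<in> Sset th m. t \<le> u0} \<inter> {t. r < t}"
  have fin: "finite ?F" using finite_S[OF pos, of m u0] by auto
  have ne: "u0 \<in> ?F" using u0 by auto
  define t where "t = Min ?F"
  have tF: "t \<in> ?F" using Min_in fin ne unfolding t_def by blast
  have tu0: "t \<le> u0" using Min_le[OF fin ne] t_def by simp
  have "\<forall>u\<in>Sset th m. r < u \<longrightarrow> t \<le> u"
  proof (intro ballI impI)
    fix u assume u: "u \<in> Sset th m" "r < u"
    show "t \<le> u"
    proof (cases "u \<le> u0")
      case True thus ?thesis using u Min_le[OF fin] t_def by simp
    next
      case False thus ?thesis using tu0 by simp
    qed
  qed
  thus ?thesis using tF by blast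
qed

definition nxt :: "point \<Rightarrow> point \<Rightarrow> real \<Rightarrow> real" where
  "nxt th m r = Inf {t \<in> Sset th m. r < t}"

lemma nxt:
  assumes pos: "\<forall>l. coord l th > 0"
  shows "nxt th m r \<in> Sset th m \<and> r < nxt th m r \<and> (\<forall>u\<in>Sset th m. r < u \<longrightarrow> nxt th m r \<le> u)"
proof -
  obtain t where t: "t \<in> Sset th m" "r < t" "\<forall>u\<in>Sset th m. r < u \<longrightarrow> t \<le> u"
    using least_ex[OF pos] by blast
  have "nxt th m r = t" unfolding nxt_def by (rule cInf_eq_minimum) (use t in auto)
  thus ?thesis using t by simp
qed

primrec tsq :: "point \<Rightarrow> point \<Rightarrow> nat \<Rightarrow> real" where
  "tsq th m 0 = nxt th m (-1)"
| "tsq th m (Suc k) = nxt th m (tsq th m k)"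

lemma tsq_props:
  assumes pos: "\<forall>l. coord l th > 0"
  shows "strict_mono (tsq th m) \<and> range (tsq th m) = Sset th m"
proof -
  have sm: "strict_mono (tsq th m)" unfolding strict_mono_Suc_iff using nxt[OF pos] by simp
  have inS: "tsq th m k \<in> Sset th m" for k by (cases k) (use nxt[OF pos] in auto)
  have "s \<in> range (tsq th m)" if s: "s \<in> Sset th m" for s
  proof -
    have "\<exists>k. s \<le> tsq th m k"
    proof (rule ccontr)
      assume "\<not> ?thesis"
      hence "range (tsq th m) \<subseteq> {t \<in> Sset th m. t \<le> s}" using inS by (auto simp: not_le less_imp_le)
      hence "finite (range (tsq th m))" using finite_S[OF pos] finite_subset by blast
      moreover have "inj (tsq th m)" using sm strict_mono_imp_inj_on by blast
      ultimately show False using finite_imageD by blast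
    qed
    define k where "k = (LEAST k. s \<le> tsq th m k)"
    have k: "s \<le> tsq th m k" unfolding k_def by (rule LeastI_ex) fact
    show ?thesis
    proof (cases k)
      case 0
      have "0 \<le> s" using s by (simp add: Sset_def)
      hence "tsq th m 0 \<le> s" using nxt[OF pos, of m "-1"] s by auto
      thus ?thesis using k 0 by (metis order_antisym rangeI)
    next
      case (Suc j)
      have "\<not> s \<le> tsq th m j" using Suc k_def not_less_Least[of j] by (metis lessI)
      hence "tsq th m (Suc j) \<le> s" using nxt[OF pos, of m "tsq th m j"] s by auto
      thus ?thesis using k Suc by (metis order_antisym rangeI)
    qed
  qed
  thus ?thesis using sm inS by auto
qed

lemma coding_ex:
  assumes pos: "\<forall>l. coord l th > 0"
  shows "\<exists>w. is_coding th m w"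
proof -
  define w where "w = (\<lambda>k. SOME l. coord l (move m th (tsq th m k)) \<in> \<int>)"
  have "coord (w k) (move m th (tsq th m k)) \<in> \<int>" for k
  proof -
    have "tsq th m k \<in> Sset th m" using tsq_props[OF pos] by blast
    hence "\<exists>l. coord l (move m th (tsq th m k)) \<in> \<int>" by (simp add: Sset_def)
    thus ?thesis unfolding w_def by (rule someI_ex)
  qed
  thus ?thesis unfolding is_coding_def using tsq_props[OF pos] unfolding Sset_def by blast
qed

lemma sm_eq:
  fixes f g :: "nat \<Rightarrow> real"
  assumes f: "strict_mono f" and g: "strict_mono g" and r: "range f = range g"
  shows "f k = g k"
proof (induction k)
  case 0
  obtain j where j: "f 0 = g j" using r by (metis rangeE rangeI)
  obtain i where i: "g 0 = f i" using r by (metis rangeE rangeI)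
  have "g 0 \<le> g j" "f 0 \<le> f i" using f g by (simp_all add: strict_mono_less_eq)
  thus ?case using i j by simp
next
  case (Suc k)
  obtain j where j: "f (Suc k) = g j" using r by (metis rangeE rangeI)
  obtain i where i: "g (Suc k) = f i" using r by (metis rangeE rangeI)
  have "g k < g j" using j Suc f by (metis lessI strict_mono_less)
  hence "Suc k \<le> j" using g by (simp add: strict_mono_less Suc_le_eq)
  hence 1: "g (Suc k) \<le> f (Suc k)" using j g by (simp add: strict_mono_less_eq)
  have "f k < f i" using i Suc g by (metis lessI strict_mono_less)
  hence "Suc k \<le> i" using f by (simp add: strict_mono_less Suc_le_eq)
  hence "f (Suc k) \<le> g (Suc k)" using i f by (simp add: strict_mono_less_eq)
  thus ?case using 1 by simp
qed

lemma coding_unique: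
  assumes wd: "well_defined_orbit th m" and c1: "is_coding th m w1" and c2: "is_coding th m w2"
  shows "w1 = w2"
proof
  fix k
  obtain ts1 where t1: "strict_mono ts1" "range ts1 = {t. t \<ge> 0 \<and> (\<exists>l. coord l (move m th t) \<in> \<int>)}"
    "\<forall>k. coord (w1 k) (move m th (ts1 k)) \<in> \<int>" using c1 unfolding is_coding_def by blast
  obtain ts2 where t2: "strict_mono ts2" "range ts2 = {t. t \<ge> 0 \<and> (\<exists>l. coord l (move m th t) \<in> \<int>)}"
    "\<forall>k. coord (w2 k) (move m th (ts2 k)) \<in> \<int>" using c2 unfolding is_coding_def by blast
  have "ts1 k = ts2 k" using sm_eq[OF t1(1) t2(1)] t1(2) t2(2) by simp
  thus "w1 k = w2 k" using wd t1(3) t2(3) unfolding well_defined_orbit_def by metis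
qed

lemma orbit_word_eq:
  assumes wd: "well_defined_orbit th m" and c: "is_coding th m w"
  shows "orbit_word th m = w"
  unfolding orbit_word_def using coding_unique[OF wd] c by (intro the_equality) auto



lemma walk:
  fixes ts :: "nat \<Rightarrow> real"
  assumes sm: "strict_mono ts" and k: "ts k = a" and b: "b \<in> range ts" and ab: "a < b"
    and gap: "\<And>t. a < t \<Longrightarrow> t < b \<Longrightarrow> t \<notin> range ts"
  shows "ts (Suc k) = b"
proof -
  have "ts k < ts (Suc k)" using sm by (simp add: strict_mono_less)
  hence 1: "b \<le> ts (Suc k)" using gap[of "ts (Suc k)"] k by force
  obtain j where j: "b = ts j" using b by auto
  have "k < j" by (metis ab j k sm strict_mono_less)
  hence "ts (Suc k) \<le> ts j" using sm by (simp add: strict_mono_less_eq Suc_le_eq)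
  thus ?thesis using 1 j by simp
qed

lemma base:
  fixes ts :: "nat \<Rightarrow> real"
  assumes sm: "strict_mono ts" and z: "0 \<in> range ts" and nn: "\<And>t. t \<in> range ts \<Longrightarrow> 0 \<le> t"
  shows "ts 0 = 0"
proof -
  obtain j where j: "0 = ts j" using z by auto
  have "ts 0 \<le> ts j" using sm by (simp add: strict_mono_less_eq)
  thus ?thesis using j nn[of "ts 0"] by simp
qed

lemma frw:
  assumes "w 0 = A" "w n = A" "0 < n" "\<And>j. 0 < j \<Longrightarrow> j < n \<Longrightarrow> w j \<noteq> A"
  shows "first_return_word w = map w [0..<n]"
proof -
  have "(LEAST k. w k = A \<and> (\<exists>n1<k. w n1 = A)) = n"
  proof (rule Least_equality)
    show "w n = A \<and> (\<exists>n1<n. w n1 = A)" using assms by blast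
  next
    fix y assume "w y = A \<and> (\<exists>n1<y. w n1 = A)"
    thus "n \<le> y" using assms(4) by (metis gr0I le_less_linear less_nat_zero_code)
  qed
  thus ?thesis unfolding first_return_word_def by simp
qed

lemma int_cases3:
  fixes x :: real
  assumes "x \<in> \<int>" "0 < x" "x < 3"
  shows "x = 1 \<or> x = 2"
proof -
  obtain k where k: "x = of_int k" using assms(1) by (auto elim: Ints_cases)
  hence "0 < k" "k < 3" using assms by simp_all
  hence "k = 1 \<or> k = 2" by arith
  thus ?thesis using k by auto
qed

definition clsf :: "real \<Rightarrow> real \<Rightarrow> real \<Rightarrow> real \<Rightarrow> sym" where
  "clsf v u y z = (let b1 = (1-y)/v; b2 = (2-y)/v; c = (1-z)/u in
     if 2 \<le> b2 then (if 2 \<le> c then a7 else if b1 < c then a2 else a1)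
     else (if 2 \<le> c then a4 else if c < b1 then a6 else if c < b2 then a3 else a5))"

lemma core:
  fixes v u y z :: real and w :: "nat \<Rightarrow> letter" and ts :: "nat \<Rightarrow> real"
  assumes v: "1/2 < v" "v < 1" and u: "0 < u" "2*u < 1"
  and yz: "0 \<le> y" "y \<le> 1" "0 \<le> z" "z \<le> 1"
  and wd: "well_defined_orbit (1/2, v, u) (0, y, z)"
  and sm: "strict_mono ts"
  and rg: "range ts = {t. t \<ge> 0 \<and> (\<exists>l. coord l (move (0,y,z) (1/2,v,u) t) \<in> \<int>)}"
  and cw: "\<forall>k. coord (w k) (move (0,y,z) (1/2,v,u) (ts k)) \<in> \<int>"
  shows "first_return_word w = Phi (clsf v u y z)"
proof -
  have cA: "coord A (move (0,y,z) (1/2,v,u) t) = t/2" for t by (simp add: move_def)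
  have cB: "coord B (move (0,y,z) (1/2,v,u) t) = y + t*v" for t by (simp add: move_def)
  have cC: "coord C (move (0,y,z) (1/2,v,u) t) = z + t*u" for t by (simp add: move_def)
  have wAB: "\<not> (t/2 \<in> \<int> \<and> y + t*v \<in> \<int>)" for t
    using wd[unfolded well_defined_orbit_def, rule_format, of A B t] cA cB by auto
  have wAC: "\<not> (t/2 \<in> \<int> \<and> z + t*u \<in> \<int>)" for t
    using wd[unfolded well_defined_orbit_def, rule_format, of A C t] cA cC by auto
  have wBC: "\<not> (y + t*v \<in> \<int> \<and> z + t*u \<in> \<int>)" for t
    using wd[unfolded well_defined_orbit_def, rule_format, of B C t] cB cC by auto
  have memS: "t \<in> range ts \<longleftrightarrow> 0 \<le> t \<and> (t/2 \<in> \<int> \<or> y + t*v \<in> \<int> \<or> z + t*u \<in> \<int>)" for t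
    unfolding rg by (simp add: ex_letter cA cB cC)
  have "y \<notin> \<int>" "z \<notin> \<int>" using wAB[of 0] wAC[of 0] by auto
  hence y0: "0 < y" "y < 1" and z0: "0 < z" "z < 1" using yz by (auto simp: order_le_less)
  define b1 where "b1 = (1-y)/v"
  define b2 where "b2 = (2-y)/v"
  define c where "c = (1-z)/u"
  have vpos: "v > 0" using v by simp
  have Yb1: "y + b1*v = 1" and Yb2: "y + b2*v = 2" using vpos by (simp_all add: b1_def b2_def)
  have Zc: "z + c*u = 1" using u by (simp add: c_def)
  have b1p: "0 < b1" using y0 vpos by (simp add: b1_def)
  have b12: "b1 < b2" using vpos by (simp add: b1_def b2_def divide_strict_right_mono)
  have "b1 * v < 2 * v" using Yb1 y0 v by linarith
  hence b1l: "b1 < 2" using vpos by simp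
  have cp: "0 < c" using z0 u by (simp add: c_def)
  have Xint: "t/2 \<in> \<int> \<Longrightarrow> 0 \<le> t \<Longrightarrow> t \<le> 2 \<Longrightarrow> t = 0 \<or> t = 2" for t :: real
  proof -
    assume h: "t/2 \<in> \<int>" "0 \<le> t" "t \<le> 2"
    have "t/2 + 1 \<in> \<int>" using h(1) by (intro Ints_add) auto
    hence "t/2 + 1 = 1 \<or> t/2 + 1 = 2" using int_cases3[of "t/2+1"] h by auto
    thus ?thesis by auto
  qed
  have Yint: "y + t*v \<in> \<int> \<Longrightarrow> 0 \<le> t \<Longrightarrow> t \<le> 2 \<Longrightarrow> t = b1 \<or> t = b2" for t
  proof -
    assume h: "y + t*v \<in> \<int>" "0 \<le> t" "t \<le> 2"
    have "t * v \<le> 2 * v" using h vpos by (simp add: mult_right_mono)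
    moreover have "0 \<le> t*v" using h vpos by simp
    ultimately have "y + t*v < 3" "0 < y + t*v" using y0 v by linarith+
    hence "y + t*v = 1 \<or> y + t*v = 2" using int_cases3 h by auto
    thus ?thesis using Yb1 Yb2 vpos by (auto simp: b1_def b2_def field_simps)
  qed
  have Zint: "z + t*u \<in> \<int> \<Longrightarrow> 0 \<le> t \<Longrightarrow> t \<le> 2 \<Longrightarrow> t = c" for t
  proof -
    assume h: "z + t*u \<in> \<int>" "0 \<le> t" "t \<le> 2"
    have "t * u \<le> 2 * u" using h u by (simp add: mult_right_mono)
    moreover have "0 \<le> t*u" using h u by simp
    ultimately have "z + t*u < 2" "0 < z + t*u" using z0 u by linarith+
    hence "z + t*u = 1" using int_cases3[of "z+t*u"] h by auto
    thus ?thesis using u by (auto simp: c_def field_simps)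
  qed
  have notS: "t \<notin> range ts" if "0 < t" "t < 2" "t \<noteq> b1" "t \<noteq> b2" "t \<noteq> c" for t
    using that Xint[of t] Yint[of t] Zint[of t] memS[of t] by auto
  have S0: "0 \<in> range ts" and S2: "2 \<in> range ts" using memS by auto
  have Sb1: "b1 \<in> range ts" using memS Yb1 b1p by auto
  have Sb2: "b2 \<in> range ts" using memS Yb2 b1p b12 by auto
  have Sc: "c \<in> range ts" using memS Zc cp by auto
  have ts0: "ts 0 = 0" using base[OF sm S0] memS by auto
  have nb2: "b2 \<noteq> 2" using wAB[of 2] Yb2 by auto
  have nc2: "c \<noteq> 2" using wAC[of 2] Zc by auto
  have nb1c: "b1 \<noteq> c" using wBC[of b1] Yb1 Zc by auto
  have nb2c: "b2 \<noteq> c" using wBC[of b2] Yb2 Zc by auto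
  have LA: "ts k / 2 \<in> \<int> \<Longrightarrow> w k = A" for k
    using cw[rule_format, of k] wAB[of "ts k"] wAC[of "ts k"] cA cB cC by (cases "w k") auto
  have LB: "y + ts k * v \<in> \<int> \<Longrightarrow> w k = B" for k
    using cw[rule_format, of k] wAB[of "ts k"] wBC[of "ts k"] cA cB cC by (cases "w k") auto
  have LC: "z + ts k * u \<in> \<int> \<Longrightarrow> w k = C" for k
    using cw[rule_format, of k] wAC[of "ts k"] wBC[of "ts k"] cA cB cC by (cases "w k") auto
  have w0: "w 0 = A" using LA ts0 by simp
  have clsv: "clsf v u y z = (if 2 \<le> b2 then (if 2 \<le> c then a7 else if b1 < c then a2 else a1)
     else (if 2 \<le> c then a4 else if c < b1 then a6 else if c < b2 then a3 else a5))"
    unfolding clsf_def b1_def b2_def c_def Let_def by simp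
  have step: "ts k' = b" if "k' = Suc k" "ts k = a" "b \<in> range ts" "a < b"
    "\<And>t. a < t \<Longrightarrow> t < b \<Longrightarrow> 0 < t \<and> t < 2 \<and> t \<noteq> b1 \<and> t \<noteq> b2 \<and> t \<noteq> c" for k k' a b
    using walk[OF sm that(2,3,4)] notS that by blast
  have j2: "j = 1" if "0 < j" "j < 2" for j :: nat using that by arith
  have j3: "j = 1 \<or> j = 2" if "0 < j" "j < 3" for j :: nat using that by arith
  have j4: "j = 1 \<or> j = 2 \<or> j = 3" if "0 < j" "j < 4" for j :: nat using that by arith
  have j5: "j = 1 \<or> j = 2 \<or> j = 3 \<or> j = 4" if "0 < j" "j < 5" for j :: nat using that by arith
  show ?thesis
  proof (cases "2 \<le> b2")
    case True
    hence b2g: "2 < b2" using nb2 by simp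
    show ?thesis
    proof (cases "2 \<le> c")
      case True
      hence cg: "2 < c" using nc2 by simp
      have t1: "ts 1 = b1" by (rule step[OF _ ts0 Sb1]) (use cp b1p b2g cg b1l in auto)
      have t2: "ts 2 = 2" by (rule step[OF _ t1 S2]) (use cp b1p b2g cg b1l in auto)
      have w: "w 1 = B" "w 2 = A" using LB[of 1] LA[of 2] t1 t2 Yb1 by auto
      hence "first_return_word w = map w [0..<2]" using w0 by (intro frw) (auto simp: less_Suc_eq numeral_eq_Suc)
      thus ?thesis using w0 w clsv True b2g by (simp add: upt_rec numeral_eq_Suc)
    next
      case False
      hence cg: "c < 2" using nc2 by simp
      show ?thesis
      proof (cases "b1 < c")
        case True
        have t1: "ts 1 = b1" by (rule step[OF _ ts0 Sb1]) (use cp b1p b2g cg b1l True in auto)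
        have t2: "ts 2 = c" by (rule step[OF _ t1 Sc]) (use cp b1p b2g cg b1l True in auto)
        have t3: "ts 3 = 2" by (rule step[OF _ t2 S2]) (use cp b1p b2g cg b1l True in auto)
        have w: "w 1 = B" "w 2 = C" "w 3 = A" using LB[of 1] LC[of 2] LA[of 3] t1 t2 t3 Yb1 Zc by auto
        hence "first_return_word w = map w [0..<3]" using w0 by (intro frw) (auto simp: less_Suc_eq numeral_eq_Suc)
        thus ?thesis using w0 w clsv True b2g cg by (simp add: upt_rec numeral_eq_Suc)
      next
        case False
        hence cb1: "c < b1" using nb1c by simp
        have t1: "ts 1 = c" by (rule step[OF _ ts0 Sc]) (use cp b1p b2g cg b1l cb1 cp in auto)
        have t2: "ts 2 = b1" by (rule step[OF _ t1 Sb1]) (use cp b1p b2g cg b1l cb1 in auto)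
        have t3: "ts 3 = 2" by (rule step[OF _ t2 S2]) (use cp b1p b2g cg b1l cb1 in auto)
        have w: "w 1 = C" "w 2 = B" "w 3 = A" using LC[of 1] LB[of 2] LA[of 3] t1 t2 t3 Yb1 Zc by auto
        hence "first_return_word w = map w [0..<3]" using w0 by (intro frw) (auto simp: less_Suc_eq numeral_eq_Suc)
        thus ?thesis using w0 w clsv False b2g cg by (simp add: upt_rec numeral_eq_Suc)
      qed
    qed
  next
    case False
    hence b2l: "b2 < 2" by simp
    show ?thesis
    proof (cases "2 \<le> c")
      case True
      hence cg: "2 < c" using nc2 by simp
      have t1: "ts 1 = b1" by (rule step[OF _ ts0 Sb1]) (use cp b1p b12 b2l cg in auto)
      have t2: "ts 2 = b2" by (rule step[OF _ t1 Sb2]) (use cp b1p b12 b2l cg in auto)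
      have t3: "ts 3 = 2" by (rule step[OF _ t2 S2]) (use cp b1p b12 b2l cg in auto)
      have w: "w 1 = B" "w 2 = B" "w 3 = A" using LB[of 1] LB[of 2] LA[of 3] t1 t2 t3 Yb1 Yb2 by auto
      hence "first_return_word w = map w [0..<3]" using w0 by (intro frw) (auto simp: less_Suc_eq numeral_eq_Suc)
      thus ?thesis using w0 w clsv True b2l by (simp add: upt_rec numeral_eq_Suc)
    next
      case False
      hence cg: "c < 2" using nc2 by simp
      show ?thesis
      proof (cases "c < b1")
        case True
        have t1: "ts 1 = c" by (rule step[OF _ ts0 Sc]) (use cp b1p b12 b2l cg cp True in auto)
        have t2: "ts 2 = b1" by (rule step[OF _ t1 Sb1]) (use cp b1p b12 b2l cg True in auto)
        have t3: "ts 3 = b2" by (rule step[OF _ t2 Sb2]) (use cp b1p b12 b2l cg True in auto)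
        have t4: "ts 4 = 2" by (rule step[OF _ t3 S2]) (use cp b1p b12 b2l cg True in auto)
        have w: "w 1 = C" "w 2 = B" "w 3 = B" "w 4 = A"
          using LC[of 1] LB[of 2] LB[of 3] LA[of 4] t1 t2 t3 t4 Yb1 Yb2 Zc by auto
        hence "first_return_word w = map w [0..<4]" using w0 by (intro frw) (auto simp: less_Suc_eq numeral_eq_Suc)
        thus ?thesis using w0 w clsv True b2l cg by (simp add: upt_rec numeral_eq_Suc)
      next
        case False
        hence b1c: "b1 < c" using nb1c by simp
        show ?thesis
        proof (cases "c < b2")
          case True
          have t1: "ts 1 = b1" by (rule step[OF _ ts0 Sb1]) (use cp b1p b12 b2l cg b1c True in auto)
          have t2: "ts 2 = c" by (rule step[OF _ t1 Sc]) (use cp b1p b12 b2l cg b1c True in auto)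
          have t3: "ts 3 = b2" by (rule step[OF _ t2 Sb2]) (use cp b1p b12 b2l cg b1c True in auto)
          have t4: "ts 4 = 2" by (rule step[OF _ t3 S2]) (use cp b1p b12 b2l cg b1c True in auto)
          have w: "w 1 = B" "w 2 = C" "w 3 = B" "w 4 = A"
            using LB[of 1] LC[of 2] LB[of 3] LA[of 4] t1 t2 t3 t4 Yb1 Yb2 Zc by auto
          hence "first_return_word w = map w [0..<4]" using w0 by (intro frw) (auto simp: less_Suc_eq numeral_eq_Suc)
          thus ?thesis using w0 w clsv True b1c b2l cg by (simp add: upt_rec numeral_eq_Suc)
        next
          case False
          hence b2c: "b2 < c" using nb2c by simp
          have t1: "ts 1 = b1" by (rule step[OF _ ts0 Sb1]) (use cp b1p b12 b2l cg b2c in auto)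
          have t2: "ts 2 = b2" by (rule step[OF _ t1 Sb2]) (use cp b1p b12 b2l cg b2c in auto)
          have t3: "ts 3 = c" by (rule step[OF _ t2 Sc]) (use cp b1p b12 b2l cg b2c in auto)
          have t4: "ts 4 = 2" by (rule step[OF _ t3 S2]) (use cp b1p b12 b2l cg b2c in auto)
          have w: "w 1 = B" "w 2 = B" "w 3 = C" "w 4 = A"
            using LB[of 1] LB[of 2] LC[of 3] LA[of 4] t1 t2 t3 t4 Yb1 Yb2 Zc by auto
          hence "first_return_word w = map w [0..<4]" using w0 by (intro frw) (auto simp: less_Suc_eq numeral_eq_Suc)
          thus ?thesis using w0 w clsv False b1c b2c b2l cg by (simp add: upt_rec numeral_eq_Suc)
        qed
      qed
    qed
  qed
qed



lemma phi_bounds: "1.615 < phi" "phi < 1.62"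
proof -
  have l: "2.23 < sqrt 5" by (rule real_less_rsqrt) (simp add: power2_eq_square)
  have "sqrt 5 < sqrt (2.24^2)" by (subst real_sqrt_less_iff) (simp add: power2_eq_square)
  hence h: "sqrt 5 < 2.24" by simp
  show "1.615 < phi" "phi < 1.62" using l h by (simp_all add: phi_def)
qed

lemma vu_bounds: "0.61 < 1/phi" "1/phi < 0.62" "0.37 < 1/phi^2" "1/phi^2 < 0.39"
proof -
  have p: "1.615 < phi" "phi < 1.62" by (rule phi_bounds)+
  have pp: "0 < phi" using p by simp
  show "0.61 < 1/phi" "1/phi < 0.62" using p pp by (simp_all add: field_simps)
  have "1.615 * 1.615 < phi * phi" using p by (intro mult_strict_mono) auto
  moreover have "phi * phi < 1.62 * 1.62" using p by (intro mult_strict_mono) auto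
  ultimately have q: "2.6 < phi^2" "phi^2 < 2.63" by (simp_all add: power2_eq_square)
  have "0 < phi^2" using pp by simp
  thus "0.37 < 1/phi^2" "1/phi^2 < 0.39" using q by (simp_all add: field_simps)
qed

lemma witnesses:
  fixes v u :: real
  assumes "0.61 < v" "v < 0.62" "0.37 < u" "u < 0.39"
  shows "clsf v u 0.1 0.1 = a7" "clsf v u 0.7 0.3 = a2" "clsf v u 0.1 0.9 = a1"
    "clsf v u 0.9 0.1 = a4" "clsf v u 0.8 0.95 = a6" "clsf v u 0.9 0.5 = a3"
    "clsf v u 0.99 0.3 = a5"
  using assms by (simp_all add: clsf_def Let_def field_simps)

theorem lemma4:
  shows "\<exists>P :: sym \<Rightarrow> point set.
           (\<forall>s. P s \<noteq> {}) \<and>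
           (\<forall>s s'. s \<noteq> s' \<longrightarrow> P s \<inter> P s' = {}) \<and>
           (\<Union>s. P s) = face_X0 \<and>
           (\<forall>s. \<forall>m \<in> P s. well_defined_orbit theta0 m \<longrightarrow>
                first_return_word (orbit_word theta0 m) = Phi s)"
proof -
  define v where "v = 1/phi"
  define u where "u = 1/phi^2"
  have vb: "0.61 < v" "v < 0.62" and ub: "0.37 < u" "u < 0.39"
    using vu_bounds unfolding v_def u_def by simp_all
  have th: "theta0 = (1/2, v, u)" unfolding theta0_def v_def u_def by simp
  define P where "P s = {m \<in> face_X0. clsf v u (fst (snd m)) (snd (snd m)) = s}" for s
  have ne: "P s \<noteq> {}" for s
  proof -
    have wit: "\<exists>y z. 0 \<le> y \<and> y \<le> 1 \<and> 0 \<le> z \<and> z \<le> 1 \<and> clsf v u y z = s"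
    proof (cases s)
      case a1 thus ?thesis using witnesses[OF vb ub] by (intro exI[of _ "0.1"] exI[of _ "0.9"]) simp
    next
      case a2 thus ?thesis using witnesses[OF vb ub] by (intro exI[of _ "0.7"] exI[of _ "0.3"]) simp
    next
      case a3 thus ?thesis using witnesses[OF vb ub] by (intro exI[of _ "0.9"] exI[of _ "0.5"]) simp
    next
      case a4 thus ?thesis using witnesses[OF vb ub] by (intro exI[of _ "0.9"] exI[of _ "0.1"]) simp
    next
      case a5 thus ?thesis using witnesses[OF vb ub] by (intro exI[of _ "0.99"] exI[of _ "0.3"]) simp
    next
      case a6 thus ?thesis using witnesses[OF vb ub] by (intro exI[of _ "0.8"] exI[of _ "0.95"]) simp
    next
      case a7 thus ?thesis using witnesses[OF vb ub] by (intro exI[of _ "0.1"] exI[of _ "0.1"]) simp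
    qed
    then obtain y z where "0 \<le> y \<and> y \<le> 1 \<and> 0 \<le> z \<and> z \<le> 1 \<and> clsf v u y z = s" by blast
    hence "(0, y, z) \<in> P s" unfolding P_def face_X0_def by auto
    thus ?thesis by blast
  qed
  have disj: "\<forall>s s'. s \<noteq> s' \<longrightarrow> P s \<inter> P s' = {}" unfolding P_def by auto
  have un: "(\<Union>s. P s) = face_X0" unfolding P_def by auto
  have main: "first_return_word (orbit_word theta0 m) = Phi s"
    if m: "m \<in> P s" and wd: "well_defined_orbit theta0 m" for s m
  proof -
    obtain y z where mm: "m = (0, y, z)" and yz: "0 \<le> y" "y \<le> 1" "0 \<le> z" "z \<le> 1"
      and cl: "clsf v u y z = s"
      using m unfolding P_def face_X0_def by auto
    have pos: "\<forall>l. coord l theta0 > 0"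
    proof
      fix l show "coord l theta0 > 0" using vb ub by (cases l) (simp_all add: th)
    qed
    obtain w where cod: "is_coding theta0 m w" using coding_ex[OF pos] by blast
    have ow: "orbit_word theta0 m = w" by (rule orbit_word_eq[OF wd cod])
    obtain ts where ts: "strict_mono ts"
      "range ts = {t. t \<ge> 0 \<and> (\<exists>l. coord l (move (0,y,z) (1/2,v,u) t) \<in> \<int>)}"
      "\<forall>k. coord (w k) (move (0,y,z) (1/2,v,u) (ts k)) \<in> \<int>"
      using cod unfolding is_coding_def mm th by blast
    have "first_return_word w = Phi (clsf v u y z)"
      by (rule core[OF _ _ _ _ yz _ ts]) (use vb ub wd in \<open>auto simp: mm th\<close>)
    thus ?thesis using ow cl by simp
  qed
  show ?thesis
    by (rule exI[of _ P]) (use ne disj un main in blast)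
qed

end
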